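(* Let $\Phi$ be an irreducible crystallographic root system with simple system $S$ and positive system $\Phi^+$, let $k$ be a positive integer, and let $\mathcal{I}=(I_1,\ldots,I_k)$ be a geometric chain of $k$ ideals in the root poset of $\Phi$, with $\underline{\mathcal{I}}=(\underline{I}_1,\ldots,\underline{I}_{k+1})$ defined by $\underline{I}_i=I_i$ for $i\le k$ and $\underline{I}_{k+1}=\bigcup_{i+j=k+1}((I_i+I_j)\cap\Phi^+)\cup I_k\cup S$. Let $\mathsf{supp}(\mathcal{I})=I_k\cap S$. If $\alpha\in\Phi^+$ is a nonnegative integer linear combination of elements of $\mathsf{supp}(\mathcal{I})$, then $r_\alpha(\underline{\mathcal{I}})=r_\alpha(\mathcal{I})$. In particular, if $\alpha\in\Phi^+$ satisfies $r_\alpha(\underline{\mathcal{I}})\le k$, then $r_\alpha(\underline{\mathcal{I}})=r_\alpha(\mathcal{I})$.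
   Context: The root poset is $\Phi^+$ with $\alpha\le\beta$ iff $\beta-\alpha$ is a nonnegative integer combination of $S$; ideals are down-closed subsets. Sumsets: $A+B=\{a+b\mid a\in A,b\in B\}$. An ascending chain $I_1\subseteq\cdots\subseteq I_K$ of ideals, with $J_i=\Phi^+\setminus I_i$, is geometric if $(I_i+I_j)\cap\Phi^+\subseteq I_{i+j}$ for all $i,j\in\{0,\ldots,K\}$ with $i+j\le K$, and $(J_i+J_j)\cap\Phi^+\subseteq J_{i+j}$ for all $i,j\in\{0,\ldots,K\}$, where $I_0=\varnothing$, $J_0=\Phi^+$, $J_i=J_K$ for $i>K$. (In the definition of $\underline{I}_{k+1}$, $i,j\in\{0,\ldots,k\}$.) For a chain $\mathcal{I}=(I_1,\ldots,I_K)$ and $\alpha\in\Phi^+$, $r_\alpha(\mathcal{I})=\min\{r_1+\cdots+r_m\mid\alpha=\alpha_1+\cdots+\alpha_m,\ \alpha_i\in I_{r_i},\ r_i\in\{1,\ldots,K\}\}$, with $r_\alpha(\mathcal{I})=\infty$ if no such decomposition exists. *)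

theory Defs
  imports "HOL-Analysis.Analysis" "HOL-Library.Extended_Nat"
begin

definition root_system :: "'a::euclidean_space set \<Rightarrow> bool" where
  "root_system \<Phi> \<longleftrightarrow>
     finite \<Phi> \<and> 0 \<notin> \<Phi> \<and> span \<Phi> = UNIV \<and>
     (\<forall>\<alpha>\<in>\<Phi>. \<forall>c::real. c *\<^sub>R \<alpha> \<in> \<Phi> \<longleftrightarrow> c = 1 \<or> c = -1) \<and>
     (\<forall>\<alpha>\<in>\<Phi>. \<forall>\<beta>\<in>\<Phi>. \<beta> - (2 * (\<beta> \<bullet> \<alpha>) / (\<alpha> \<bullet> \<alpha>)) *\<^sub>R \<alpha> \<in> \<Phi>)"

definition crystallographic :: "'a::euclidean_space set \<Rightarrow> bool" where
  "crystallographic \<Phi> \<longleftrightarrow> (\<forall>\<alpha>\<in>\<Phi>. \<forall>\<beta>\<in>\<Phi>. 2 * (\<beta> \<bullet> \<alpha>) / (\<alpha> \<bullet> \<alpha>) \<in> \<int>)"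

definition irreducible_rs :: "'a::euclidean_space set \<Rightarrow> bool" where
  "irreducible_rs \<Phi> \<longleftrightarrow>
     \<not> (\<exists>A B. A \<noteq> {} \<and> B \<noteq> {} \<and> A \<union> B = \<Phi> \<and> A \<inter> B = {} \<and>
            (\<forall>a\<in>A. \<forall>b\<in>B. a \<bullet> b = 0))"

definition nonneg_comb :: "'a::euclidean_space set \<Rightarrow> 'a \<Rightarrow> bool" where
  "nonneg_comb S x \<longleftrightarrow> (\<exists>c::'a \<Rightarrow> real. (\<forall>s\<in>S. c s \<ge> 0) \<and> x = (\<Sum>s\<in>S. c s *\<^sub>R s))"

definition nat_comb :: "'a::euclidean_space set \<Rightarrow> 'a \<Rightarrow> bool" where
  "nat_comb S x \<longleftrightarrow> (\<exists>c::'a \<Rightarrow> nat. x = (\<Sum>s\<in>S. of_nat (c s) *\<^sub>R s))"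

definition simple_system :: "'a::euclidean_space set \<Rightarrow> 'a set \<Rightarrow> bool" where
  "simple_system \<Phi> S \<longleftrightarrow> S \<subseteq> \<Phi> \<and> independent S \<and>
     (\<forall>\<alpha>\<in>\<Phi>. nonneg_comb S \<alpha> \<or> nonneg_comb S (- \<alpha>))"

definition positive_roots :: "'a::euclidean_space set \<Rightarrow> 'a set \<Rightarrow> 'a set" where
  "positive_roots \<Phi> S = {\<alpha>\<in>\<Phi>. nonneg_comb S \<alpha>}"

definition root_le :: "'a::euclidean_space set \<Rightarrow> 'a \<Rightarrow> 'a \<Rightarrow> bool" where
  "root_le S \<alpha> \<beta> \<longleftrightarrow> nat_comb S (\<beta> - \<alpha>)"

definition root_ideal :: "'a::euclidean_space set \<Rightarrow> 'a set \<Rightarrow> 'a set \<Rightarrow> bool" where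
  "root_ideal Pp S I \<longleftrightarrow> I \<subseteq> Pp \<and> (\<forall>\<beta>\<in>I. \<forall>\<alpha>\<in>Pp. root_le S \<alpha> \<beta> \<longrightarrow> \<alpha> \<in> I)"

definition sumset :: "'a::plus set \<Rightarrow> 'a set \<Rightarrow> 'a set" where
  "sumset A B = {a + b |a b. a \<in> A \<and> b \<in> B}"

text \<open>A chain is given as I :: nat => 'a set with members I 1, ..., I K.
  Extended chain: I_0 = {} and I_i = I_K for i > K (only used for J_i).\<close>
definition chainI :: "(nat \<Rightarrow> 'a set) \<Rightarrow> nat \<Rightarrow> nat \<Rightarrow> 'a set" where
  "chainI I K i = (if i = 0 then {} else I (min i K))"

definition chainJ :: "'a set \<Rightarrow> (nat \<Rightarrow> 'a set) \<Rightarrow> nat \<Rightarrow> nat \<Rightarrow> 'a set" where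
  "chainJ Pp I K i = Pp - chainI I K i"

definition ascending_ideal_chain ::
  "'a::euclidean_space set \<Rightarrow> 'a set \<Rightarrow> (nat \<Rightarrow> 'a set) \<Rightarrow> nat \<Rightarrow> bool" where
  "ascending_ideal_chain Pp S I K \<longleftrightarrow>
     (\<forall>i\<in>{1..K}. root_ideal Pp S (I i)) \<and> (\<forall>i. 1 \<le> i \<and> i < K \<longrightarrow> I i \<subseteq> I (Suc i))"

definition geometric_chain ::
  "'a::euclidean_space set \<Rightarrow> 'a set \<Rightarrow> (nat \<Rightarrow> 'a set) \<Rightarrow> nat \<Rightarrow> bool" where
  "geometric_chain Pp S I K \<longleftrightarrow> ascending_ideal_chain Pp S I K \<and>
     (\<forall>i\<le>K. \<forall>j\<le>K. i + j \<le> K \<longrightarrow>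
        sumset (chainI I K i) (chainI I K j) \<inter> Pp \<subseteq> chainI I K (i + j)) \<and>
     (\<forall>i\<le>K. \<forall>j\<le>K.
        sumset (chainJ Pp I K i) (chainJ Pp I K j) \<inter> Pp \<subseteq> chainJ Pp I K (i + j))"

definition under_chain ::
  "'a::euclidean_space set \<Rightarrow> 'a set \<Rightarrow> (nat \<Rightarrow> 'a set) \<Rightarrow> nat \<Rightarrow> nat \<Rightarrow> 'a set" where
  "under_chain Pp S I k i =
     (if i \<le> k then I i
      else if i = k + 1 then
        (\<Union>i'\<in>{0..k}. \<Union>j\<in>{0..k}. if i' + j = k + 1
            then sumset (chainI I k i') (chainI I k j) \<inter> Pp else {}) \<union> I k \<union> S
      else {})"

definition r_alpha :: "(nat \<Rightarrow> 'a::monoid_add set) \<Rightarrow> nat \<Rightarrow> 'a \<Rightarrow> enat" where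
  "r_alpha I K \<alpha> = (INF xs \<in> {xs :: ('a \<times> nat) list. xs \<noteq> [] \<and>
        (\<forall>(\<beta>, r)\<in>set xs. r \<in> {1..K} \<and> \<beta> \<in> I r) \<and> \<alpha> = sum_list (map fst xs)}.
        enat (sum_list (map snd xs)))"

end

theory Submission
  imports Defs
begin

lemma list_convert:
  fixes W :: "nat \<Rightarrow> 'a::monoid_add set" and Q :: "'a \<Rightarrow> nat \<Rightarrow> bool"
  assumes step: "\<And>b q. Q b q \<Longrightarrow> \<exists>ys. ys \<noteq> [] \<and> (\<forall>(c,p)\<in>set ys. p \<in> {1..K} \<and> c \<in> W p)
                    \<and> b = sum_list (map fst ys) \<and> sum_list (map snd ys) \<le> q"
  shows "(\<forall>(b,q)\<in>set xs. Q b q) \<Longrightarrow> \<exists>ys. (xs \<noteq> [] \<longrightarrow> ys \<noteq> []) \<and> (\<forall>(c,p)\<in>set ys. p \<in> {1..K} \<and> c \<in> W p)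
     \<and> sum_list (map fst xs) = sum_list (map fst ys) \<and> sum_list (map snd ys) \<le> sum_list (map snd xs)"
proof (induction xs)
  case Nil then show ?case by (intro exI[of _ "[]"]) auto
next
  case (Cons x xs)
  obtain b q where x: "x = (b,q)" by (cases x)
  from Cons.prems x have "Q b q" by auto
  from step[OF this] obtain ys1 where ys1: "ys1 \<noteq> []" "(\<forall>(c,p)\<in>set ys1. p \<in> {1..K} \<and> c \<in> W p)"
    "b = sum_list (map fst ys1)" "sum_list (map snd ys1) \<le> q" by blast
  from Cons obtain ys2 where ys2: "(\<forall>(c,p)\<in>set ys2. p \<in> {1..K} \<and> c \<in> W p)"
     "sum_list (map fst xs) = sum_list (map fst ys2)" "sum_list (map snd ys2) \<le> sum_list (map snd xs)"
    by auto
  show ?case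
    by (intro exI[of _ "ys1 @ ys2"]) (use x ys1 ys2 in \<open>auto intro: add_mono\<close>)
qed

lemma inf_attain:
  fixes f :: "'b \<Rightarrow> enat"
  assumes "(INF x\<in>A. f x) \<noteq> \<infinity>"
  shows "\<exists>x\<in>A. f x = (INF x\<in>A. f x)"
proof -
  have ne: "f ` A \<noteq> {}" using assms by (auto simp: top_enat_def)
  then have "(LEAST y. y \<in> f ` A) \<in> f ` A" by (auto intro: LeastI)
  then show ?thesis using ne unfolding Inf_enat_def by auto
qed

lemma linear_sum_list:
  fixes g :: "'a::real_vector \<Rightarrow> real"
  assumes "linear g"
  shows "g (sum_list xs) = sum_list (map g xs)"
  by (induction xs) (auto simp: linear_add[OF assms] linear_0[OF assms])

lemma elem_le_sum_list_nonneg: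
  fixes xs :: "real list"
  assumes "x \<in> set xs" "\<And>y. y \<in> set xs \<Longrightarrow> y \<ge> 0"
  shows "x \<le> sum_list xs"
  using assms
proof (induction xs)
  case Nil then show ?case by simp
next
  case (Cons a xs)
  have "0 \<le> sum_list xs" using Cons.prems(2) by (intro sum_list_nonneg) auto
  have "0 \<le> a" using Cons.prems(2) by auto
  then show ?case using Cons \<open>0 \<le> sum_list xs\<close> by (cases "x = a") (auto simp: add_increasing add_increasing2)
qed

lemma nat_elem_le_sum_list:
  fixes xs :: "nat list"
  shows "x \<in> set xs \<Longrightarrow> x \<le> sum_list xs"
  by (induction xs) auto

theorem lemma10:
  fixes \<Phi> S :: "'a::euclidean_space set" and I :: "nat \<Rightarrow> 'a set" and k :: nat and \<alpha> :: 'a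
  assumes "root_system \<Phi>" and "crystallographic \<Phi>" and "irreducible_rs \<Phi>"
    and "simple_system \<Phi> S"
    and "k \<ge> 1"
    and "geometric_chain (positive_roots \<Phi> S) S I k"
    and "\<alpha> \<in> positive_roots \<Phi> S"
  shows "(nat_comb (I k \<inter> S) \<alpha> \<longrightarrow>
           r_alpha (under_chain (positive_roots \<Phi> S) S I k) (k + 1) \<alpha> = r_alpha I k \<alpha>)
       \<and> (r_alpha (under_chain (positive_roots \<Phi> S) S I k) (k + 1) \<alpha> \<le> enat k \<longrightarrow>
           r_alpha (under_chain (positive_roots \<Phi> S) S I k) (k + 1) \<alpha> = r_alpha I k \<alpha>)"
proof -
  define P where "P = positive_roots \<Phi> S"
  define U where "U = under_chain P S I k"
  have SPhi: "S \<subseteq> \<Phi>" and indS: "independent S" using assms(4) unfolding simple_system_def by auto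
  have finS: "finite S" using assms(1) SPhi finite_subset unfolding root_system_def by blast
  have geo: "geometric_chain P S I k" using assms(6) P_def by simp
  have IP: "\<And>r. r \<in> {1..k} \<Longrightarrow> I r \<subseteq> P" using geo
    unfolding geometric_chain_def ascending_ideal_chain_def root_ideal_def by blast
  have UI: "\<And>r. r \<le> k \<Longrightarrow> U r = I r" unfolding U_def under_chain_def by simp
  have UPS: "\<And>r. r \<in> {1..k+1} \<Longrightarrow> U r \<subseteq> P \<union> S"
  proof -
    fix r assume r: "r \<in> {1..k+1}"
    show "U r \<subseteq> P \<union> S"
    proof (cases "r \<le> k")
      case True then show ?thesis using UI IP r by auto
    next
      case False
      then have "r = k + 1" using r by auto
      then show ?thesis using IP[of k] assms(5) unfolding U_def under_chain_def
        by (auto split: if_splits)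
    qed
  qed
  define DU where "DU = {xs :: ('a \<times> nat) list. xs \<noteq> [] \<and> (\<forall>(\<beta>, r)\<in>set xs. r \<in> {1..k+1} \<and> \<beta> \<in> U r) \<and> \<alpha> = sum_list (map fst xs)}"
  define DI where "DI = {xs :: ('a \<times> nat) list. xs \<noteq> [] \<and> (\<forall>(\<beta>, r)\<in>set xs. r \<in> {1..k} \<and> \<beta> \<in> I r) \<and> \<alpha> = sum_list (map fst xs)}"
  define c where "c = (\<lambda>xs::('a \<times> nat) list. enat (sum_list (map snd xs)))"
  have rU: "r_alpha U (k+1) \<alpha> = (INF xs\<in>DU. c xs)" unfolding r_alpha_def DU_def c_def by simp
  have rI: "r_alpha I k \<alpha> = (INF xs\<in>DI. c xs)" unfolding r_alpha_def DI_def c_def by simp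
  have DIU: "DI \<subseteq> DU" unfolding DI_def DU_def using UI by fastforce
  have le1: "r_alpha U (k+1) \<alpha> \<le> r_alpha I k \<alpha>" unfolding rU rI
    by (rule INF_superset_mono[OF DIU]) simp
  have part2: "r_alpha U (k+1) \<alpha> = r_alpha I k \<alpha>" if h: "r_alpha U (k+1) \<alpha> \<le> enat k"
  proof -
    have "(INF xs\<in>DU. c xs) \<noteq> \<infinity>" using rU h by (metis enat_ord_simps(5) infinity_ileE)
    then obtain xs where xs: "xs \<in> DU" "c xs = (INF xs\<in>DU. c xs)" using inf_attain by blast
    have "enat (sum_list (map snd xs)) \<le> enat k" using h xs rU unfolding c_def by simp
    then have sk: "sum_list (map snd xs) \<le> k" by simp
    have "\<forall>(\<beta>, r)\<in>set xs. r \<le> k"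
    proof (intro ballI, clarify)
      fix b r assume "(b, r) \<in> set xs"
      then have "r \<in> set (map snd xs)" by force
      then have "r \<le> sum_list (map snd xs)" by (rule nat_elem_le_sum_list)
      then show "r \<le> k" using sk by simp
    qed
    then have "xs \<in> DI" using xs(1) UI unfolding DU_def DI_def by fastforce
    then have "r_alpha I k \<alpha> \<le> c xs" unfolding rI by (rule INF_lower)
    then show ?thesis using le1 xs rU by auto
  qed
  have part1: "r_alpha U (k+1) \<alpha> = r_alpha I k \<alpha>" if nc: "nat_comb (I k \<inter> S) \<alpha>"
  proof -
    obtain cf :: "'a \<Rightarrow> nat" where cf: "\<alpha> = (\<Sum>s\<in>I k \<inter> S. of_nat (cf s) *\<^sub>R s)"
      using nc unfolding nat_comb_def by blast
    have "r_alpha I k \<alpha> \<le> r_alpha U (k+1) \<alpha>" unfolding rU rI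
    proof (rule INF_mono)
      fix xs assume xs: "xs \<in> DU"
      have noS: "\<forall>(b,q)\<in>set xs. b \<in> S \<longrightarrow> b \<in> I k"
      proof (intro ballI, clarify, rule ccontr)
        fix b q assume bq: "(b, q) \<in> set xs" "b \<in> S" "b \<notin> I k"
        obtain g :: "'a \<Rightarrow> real" where g: "linear g" "\<forall>x\<in>S. g x = (if x = b then 1 else 0)"
          using linear_independent_extend[OF indS, of "\<lambda>x. if x = b then 1 else 0"] by blast
        have ga: "g \<alpha> = 0"
        proof -
          have "g \<alpha> = (\<Sum>s\<in>I k \<inter> S. of_nat (cf s) * g s)"
            unfolding cf by (simp add: linear_sum[OF g(1)] linear_cmul[OF g(1)])
          also have "\<dots> = 0" using g(2) bq(3) by (intro sum.neutral) auto
          finally show ?thesis .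
        qed
        have gnn: "g \<gamma> \<ge> 0" if "\<gamma> \<in> P \<union> S" for \<gamma>
        proof (cases "\<gamma> \<in> S")
          case True then show ?thesis using g(2) by auto
        next
          case False
          then have "\<gamma> \<in> P" using that by auto
          then obtain d where d: "\<forall>s\<in>S. d s \<ge> 0" "\<gamma> = (\<Sum>s\<in>S. d s *\<^sub>R s)"
            unfolding P_def positive_roots_def nonneg_comb_def by blast
          have "g \<gamma> = (\<Sum>s\<in>S. d s * g s)"
            using d(2) by (simp add: linear_sum[OF g(1)] linear_cmul[OF g(1)])
          also have "\<dots> \<ge> 0" using d(1) g(2) by (intro sum_nonneg) auto
          finally show ?thesis .
        qed
        have all: "\<And>y. y \<in> set (map (g \<circ> fst) xs) \<Longrightarrow> y \<ge> 0"
        proof -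
          fix y assume "y \<in> set (map (g \<circ> fst) xs)"
          then obtain \<gamma> p where "(\<gamma>, p) \<in> set xs" "y = g \<gamma>" by auto
          then have "p \<in> {1..k+1}" "\<gamma> \<in> U p" using xs unfolding DU_def by auto
          then show "y \<ge> 0" using UPS gnn \<open>y = g \<gamma>\<close> by blast
        qed
        have "g b \<in> set (map (g \<circ> fst) xs)" using bq(1) by force
        then have "g b \<le> sum_list (map (g \<circ> fst) xs)" using all by (rule elem_le_sum_list_nonneg)
        also have "\<dots> = g \<alpha>" using xs unfolding DU_def
          by (simp add: linear_sum_list[OF g(1)])
        finally show False using ga g(2) bq(2) by simp
      qed
      have conv: "\<exists>ys. ys \<noteq> [] \<and> (\<forall>(c,p)\<in>set ys. p \<in> {1..k} \<and> c \<in> I p)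
                    \<and> b = sum_list (map fst ys) \<and> sum_list (map snd ys) \<le> q"
        if bq: "q \<in> {1..k+1} \<and> b \<in> U q \<and> (b \<in> S \<longrightarrow> b \<in> I k)" for b q
      proof (cases "q \<le> k")
        case True
        then show ?thesis using bq UI by (intro exI[of _ "[(b,q)]"]) auto
      next
        case False
        then have q: "q = k + 1" using bq by auto
        have bin: "b \<in> (\<Union>i'\<in>{0..k}. \<Union>j\<in>{0..k}. if i' + j = k + 1
            then sumset (chainI I k i') (chainI I k j) \<inter> P else {}) \<union> I k \<union> S"
          using bq q unfolding U_def under_chain_def by simp
        show ?thesis
        proof (cases "b \<in> I k")
          case True
          then show ?thesis using assms(5) q by (intro exI[of _ "[(b,k)]"]) auto
        next
          case False
          then obtain i' j where ij: "i' \<le> k" "j \<le> k" "i' + j = k + 1"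
            "b \<in> sumset (chainI I k i') (chainI I k j)"
            using bin bq by (auto split: if_splits)
          have "i' \<noteq> 0" "j \<noteq> 0" using ij unfolding chainI_def sumset_def by auto
          then have "chainI I k i' = I i'" "chainI I k j = I j" using ij unfolding chainI_def by auto
          then obtain a1 a2 where a: "a1 \<in> I i'" "a2 \<in> I j" "b = a1 + a2"
            using ij(4) unfolding sumset_def by auto
          show ?thesis using a ij \<open>i' \<noteq> 0\<close> \<open>j \<noteq> 0\<close> q
            by (intro exI[of _ "[(a1,i'),(a2,j)]"]) auto
        qed
      qed
      have pre: "\<forall>(b,q)\<in>set xs. q \<in> {1..k+1} \<and> b \<in> U q \<and> (b \<in> S \<longrightarrow> b \<in> I k)"
        using xs noS unfolding DU_def by auto
      obtain ys where ys: "(xs \<noteq> [] \<longrightarrow> ys \<noteq> [])" "(\<forall>(c,p)\<in>set ys. p \<in> {1..k} \<and> c \<in> I p)"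
        "sum_list (map fst xs) = sum_list (map fst ys)" "sum_list (map snd ys) \<le> sum_list (map snd xs)"
        using list_convert[where Q="\<lambda>b q. q \<in> {1..k+1} \<and> b \<in> U q \<and> (b \<in> S \<longrightarrow> b \<in> I k)"
            and K=k and W=I, OF conv pre] by blast
      have "ys \<in> DI" using ys xs unfolding DI_def DU_def by auto
      moreover have "c ys \<le> c xs" using ys(4) unfolding c_def by simp
      ultimately show "\<exists>ys\<in>DI. c ys \<le> c xs" by blast
    qed
    then show ?thesis using le1 by simp
  qed
  show ?thesis using part1 part2 unfolding U_def P_def by blast
qed

end
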